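(* Let $A$ be a totally ordered alphabet, $u\in A^*$, and $b,\ell\in A$ with $b>\ell$. Suppose that $\rho_\ell(u)$ is positive (i.e. lies in $A^*$), and that $u$ has a factor $\pi b$, where $\pi$ is a nonempty palindrome. Then $\rho_\ell(\pi)\ell^{-1}$ is a positive palindrome.
   Context: $F(A)$ is the free group on $A$, and elements of $F(A)$ lying in $A^*$ are called positive. The reversal $g\mapsto\tilde g$ is the unique anti-automorphism of $F(A)$ fixing each letter; a palindrome is an element fixed by it. For $\ell\in A$, $\rho_\ell$ is the automorphism of $F(A)$ defined on letters $a\in A$ by $\rho_\ell(a)=a\ell$ if $a<\ell$, $\rho_\ell(\ell)=\ell$, and $\rho_\ell(a)=\ell^{-1}a$ if $a>\ell$. *)

theory Defs
  imports Main
begin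

text \<open>Elements of the free group F(A) are represented by freely reduced words
  over A and its formal inverses: (True, a) is the letter a, (False, a) is a^-1.\<close>

type_synonym 'a fgword = "(bool \<times> 'a) list"

fun cons_red :: "bool \<times> 'a \<Rightarrow> 'a fgword \<Rightarrow> 'a fgword" where
  "cons_red x [] = [x]"
| "cons_red x (y # ys) = (if fst x \<noteq> fst y \<and> snd x = snd y then ys else x # y # ys)"

definition fg_reduce :: "'a fgword \<Rightarrow> 'a fgword" where
  "fg_reduce w = foldr cons_red w []"

definition fg_reduced :: "'a fgword \<Rightarrow> bool" where
  "fg_reduced w \<longleftrightarrow> fg_reduce w = w"

definition fg_mult :: "'a fgword \<Rightarrow> 'a fgword \<Rightarrow> 'a fgword" where
  "fg_mult v w = fg_reduce (v @ w)"

definition fg_inv :: "'a fgword \<Rightarrow> 'a fgword" where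
  "fg_inv w = rev (map (\<lambda>(s, a). (\<not> s, a)) w)"

definition fg_of_word :: "'a list \<Rightarrow> 'a fgword" where
  "fg_of_word u = map (\<lambda>a. (True, a)) u"

definition fg_positive :: "'a fgword \<Rightarrow> bool" where
  "fg_positive w \<longleftrightarrow> (\<forall>x \<in> set w. fst x)"

text \<open>Reversal anti-automorphism fixing each letter (on reduced words it is
  plain list reversal, keeping exponents), and palindromes.\<close>
definition fg_rev :: "'a fgword \<Rightarrow> 'a fgword" where
  "fg_rev w = fg_reduce (rev w)"

definition fg_palindrome :: "'a fgword \<Rightarrow> bool" where
  "fg_palindrome w \<longleftrightarrow> fg_rev w = w"

definition rho_letter :: "'a::linorder \<Rightarrow> 'a \<Rightarrow> 'a fgword" where
  "rho_letter l a = (if a < l then [(True, a), (True, l)]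
                     else if a = l then [(True, l)]
                     else [(False, l), (True, a)])"

fun rho_gen :: "'a::linorder \<Rightarrow> bool \<times> 'a \<Rightarrow> 'a fgword" where
  "rho_gen l (True, a) = rho_letter l a"
| "rho_gen l (False, a) = fg_inv (rho_letter l a)"

definition rho :: "'a::linorder \<Rightarrow> 'a fgword \<Rightarrow> 'a fgword" where
  "rho l w = fg_reduce (concat (map (rho_gen l) w))"

end

theory Submission
  imports Defs
begin

fun T :: "'a::linorder \<Rightarrow> bool \<Rightarrow> bool \<Rightarrow> 'a list \<Rightarrow> 'a fgword" where
  "T l pb nb [] = []"
| "T l pb nb (a # u) = (if l < a \<and> \<not> pb then [(False, l)] else []) @
     (if a \<noteq> l then [(True, a)] else []) @
     (if a \<le> l \<and> \<not> (if u = [] then nb else l < hd u) then [(True, l)] else []) @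
     T l (a \<le> l) nb u"

lemma T_append:
  "T l pb nb (xs @ ys) = T l pb (if ys = [] then nb else l < hd ys) xs @
     T l (if xs = [] then pb else last xs \<le> l) nb ys"
  by (induction xs arbitrary: pb) auto

lemma T_True_hd: "u \<noteq> [] \<Longrightarrow> \<exists>y ys. T l True False u = (True, y) # ys"
proof (induction u)
  case Nil then show ?case by simp
next
  case (Cons a u)
  show ?case
  proof (cases u)
    case Nil then show ?thesis by auto
  next
    case (Cons c u')
    then obtain y ys where "T l (a \<le> l) False u = (True, y) # ys" if "a \<le> l"
      using Cons.IH by auto
    then show ?thesis using Cons Cons.IH by (cases "a = l") auto
  qed
qed

lemma T_False: "T l False nb (a # u) = (if l < a then [(False, l)] else []) @ T l True nb (a # u)"
  by simp

lemma reduce_append: "fg_reduce (xs @ ys) = foldr cons_red xs (fg_reduce ys)"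
  by (simp add: fg_reduce_def)

lemma R_eq: "fg_reduce (concat (map (rho_letter l) u)) = T l False False u"
proof (induction u)
  case Nil then show ?case by (simp add: fg_reduce_def)
next
  case (Cons a u)
  have "fg_reduce (concat (map (rho_letter l) (a # u))) =
        foldr cons_red (rho_letter l a) (T l False False u)"
    using Cons.IH by (simp add: reduce_append)
  also have "\<dots> = T l False False (a # u)"
  proof (cases u)
    case Nil then show ?thesis by (auto simp: rho_letter_def)
  next
    case (Cons c u')
    obtain y ys where yy: "T l True False u = (True, y) # ys" using T_True_hd Cons by blast
    have ne: "u \<noteq> []" and hc: "hd u = c" using Cons by auto
    have e: "T l False False u = (if l < c then [(False, l)] else []) @ T l True False u"
      using Cons T_False by blast
    show ?thesis
    proof (cases "l < c")
      case True
      then have e': "T l False False u = (False, l) # (True, y) # ys" using e yy by simp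
      show ?thesis
      proof (cases a l rule: linorder_cases)
        case less
        then have "a \<noteq> l" "\<not> l < a" "a \<le> l" by auto
        then show ?thesis using less by (simp add: rho_letter_def e' yy ne hc True)
      next
        case equal
        then show ?thesis by (simp add: rho_letter_def e' yy ne hc True)
      next
        case greater
        then have "a \<noteq> l" "\<not> a < l" "\<not> a \<le> l" by auto
        then show ?thesis using greater by (simp add: rho_letter_def e' yy ne hc True)
      qed
    next
      case False
      then have e': "T l False False u = (True, y) # ys" using e yy by simp
      show ?thesis
      proof (cases a l rule: linorder_cases)
        case less
        then have "a \<noteq> l" "\<not> l < a" "a \<le> l" by auto
        then show ?thesis using less by (simp add: rho_letter_def e' yy ne hc False)
      next
        case equal
        then show ?thesis by (simp add: rho_letter_def e' yy ne hc False)
      next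
        case greater
        then have "a \<noteq> l" "\<not> a < l" "\<not> a \<le> l" by auto
        then show ?thesis using greater by (simp add: rho_letter_def e' yy ne hc False)
      qed
    qed
  qed
  finally show ?case .
qed

lemma rho_word: "rho l (fg_of_word u) = T l False False u"
proof -
  have "map (rho_gen l) (fg_of_word u) = map (rho_letter l) u"
    by (simp add: fg_of_word_def)
  then show ?thesis by (simp add: rho_def R_eq)
qed

lemma pos_reduce: "fg_positive w \<Longrightarrow> fg_reduce w = w"
proof (induction w)
  case Nil then show ?case by (simp add: fg_reduce_def)
next
  case (Cons x w)
  then have "fg_reduce w = w" "fst x" by (auto simp: fg_positive_def)
  then show ?case using Cons.prems
    by (cases w) (auto simp: fg_reduce_def fg_positive_def)
qed

fun G :: "'a::linorder \<Rightarrow> 'a list \<Rightarrow> 'a fgword" where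
  "G l [] = []"
| "G l [a] = (if a \<noteq> l then [(True, a)] else [])"
| "G l (a # b # xs) = (if a \<noteq> l then [(True, a)] else []) @
     (if a \<le> l \<and> b \<le> l then [(True, l)] else []) @ G l (b # xs)"

lemma G_snoc: "G l (xs @ [b]) = G l xs @
   (if xs \<noteq> [] \<and> last xs \<le> l \<and> b \<le> l then [(True, l)] else []) @
   (if b \<noteq> l then [(True, b)] else [])"
  by (induction l xs rule: G.induct) auto

lemma G_rev: "rev (G l xs) = G l (rev xs)"
proof (induction l xs rule: G.induct)
  case (3 l a b xs)
  have "G l (rev xs @ [b, a]) = G l (rev xs @ [b]) @
     (if b \<le> l \<and> a \<le> l then [(True, l)] else []) @ (if a \<noteq> l then [(True, a)] else [])"
    using G_snoc[of l "rev xs @ [b]" a] by simp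
  then show ?case using 3 by simp
qed auto

lemma pos_append: "fg_positive (xs @ ys) \<longleftrightarrow> fg_positive xs \<and> fg_positive ys"
  by (auto simp: fg_positive_def)

lemma T_G: "fg_positive (T l pb True xs) \<Longrightarrow> T l pb True xs = G l xs"
proof (induction l xs arbitrary: pb rule: G.induct)
  case (1 l)
  then show ?case by simp
next
  case (2 l a)
  then have "\<not> (l < a \<and> \<not> pb)"
    by (cases "l < a \<and> \<not> pb") (simp_all add: fg_positive_def)
  then show ?case by simp
next
  case (3 l a b xs)
  let ?L = "(if l < a \<and> \<not> pb then [(False, l)] else [])"
  let ?K = "(if a \<noteq> l then [(True, a)] else [])"
  let ?M = "(if a \<le> l \<and> \<not> l < b then [(True, l)] else [])"
  have e: "T l pb True (a # b # xs) = ?L @ ?K @ ?M @ T l (a \<le> l) True (b # xs)"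
    by simp
  have p: "fg_positive ?L" "fg_positive (T l (a \<le> l) True (b # xs))"
    using 3(2) unfolding e pos_append by auto
  have L: "?L = []"
  proof (rule ccontr)
    assume "?L \<noteq> []"
    then have "?L = [(False, l)]" by meson
    then show False using p(1) by (simp add: fg_positive_def)
  qed
  have M: "?M = (if a \<le> l \<and> b \<le> l then [(True, l)] else [])"
    by (simp add: not_less)
  show ?case unfolding e L M using 3(1)[OF p(2)] by simp
qed

lemma T_last: "xs \<noteq> [] \<Longrightarrow> last xs \<le> l \<Longrightarrow> T l pb False xs = T l pb True xs @ [(True, l)]"
  by (induction xs arbitrary: pb) auto

lemma T_hd: "xs \<noteq> [] \<Longrightarrow> hd xs \<le> l \<Longrightarrow> T l pb nb xs = T l pb' nb xs"
  by (cases xs) auto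

theorem lemma4p2:
  fixes u p \<pi> s :: "'a::linorder list" and b l :: 'a
  assumes "l < b"
    and "fg_positive (rho l (fg_of_word u))"
    and "u = p @ \<pi> @ [b] @ s"
    and "\<pi> \<noteq> []"
    and "rev \<pi> = \<pi>"
  shows "fg_positive (fg_mult (rho l (fg_of_word \<pi>)) (fg_inv [(True, l)])) \<and>
         fg_palindrome (fg_mult (rho l (fg_of_word \<pi>)) (fg_inv [(True, l)]))"
proof -
  define q where "q = (if p = [] then False else last p \<le> l)"
  have pos: "fg_positive (T l False False u)" using assms(2) by (simp add: rho_word)
  have "T l False False u = T l False (l < hd (\<pi> @ [b] @ s)) p @ T l q False (\<pi> @ [b] @ s)"
    unfolding assms(3) q_def by (subst T_append) (simp add: assms(4))
  then have pos2: "fg_positive (T l q False (\<pi> @ [b] @ s))" using pos by (simp add: fg_positive_def)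
  have e2: "T l q False (\<pi> @ [b] @ s) = T l q True \<pi> @ T l (last \<pi> \<le> l) False (b # s)"
    by (subst T_append) (simp add: assms(1,4))
  have posP: "fg_positive (T l q True \<pi>)" and posB: "fg_positive (T l (last \<pi> \<le> l) False (b # s))"
    using pos2 unfolding e2 by (auto simp: fg_positive_def)
  have lastl: "last \<pi> \<le> l"
  proof (rule ccontr)
    assume "\<not> last \<pi> \<le> l"
    then show False using posB assms(1) by (simp add: fg_positive_def)
  qed
  have hdl: "hd \<pi> \<le> l" using lastl assms(5) assms(4) by (metis hd_rev)
  have TG: "T l False True \<pi> = G l \<pi>"
    using T_hd[OF assms(4) hdl, where pb=False and nb=True and pb'=q] T_G[OF posP] by simp
  have posG: "fg_positive (G l \<pi>)" using posP T_G[OF posP] by simp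
  have rp: "rho l (fg_of_word \<pi>) = G l \<pi> @ [(True, l)]"
    unfolding rho_word T_last[OF assms(4) lastl] TG by (rule refl)
  have m: "fg_mult (rho l (fg_of_word \<pi>)) (fg_inv [(True, l)]) = G l \<pi>"
  proof -
    have "fg_mult (rho l (fg_of_word \<pi>)) (fg_inv [(True, l)]) = fg_reduce (G l \<pi> @ [(True, l), (False, l)])"
      by (simp add: rp fg_mult_def fg_inv_def)
    also have "\<dots> = foldr cons_red (G l \<pi>) []"
      by (simp add: fg_reduce_def)
    also have "\<dots> = G l \<pi>" using pos_reduce[OF posG] by (simp add: fg_reduce_def)
    finally show ?thesis .
  qed
  have "fg_rev (G l \<pi>) = G l \<pi>"
  proof -
    have "fg_positive (rev (G l \<pi>))" using posG by (simp add: fg_positive_def)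
    then have "fg_rev (G l \<pi>) = rev (G l \<pi>)" by (simp add: fg_rev_def pos_reduce)
    also have "\<dots> = G l \<pi>" by (simp add: G_rev assms(5))
    finally show ?thesis .
  qed
  then show ?thesis using m posG by (simp add: fg_palindrome_def)
qed

end
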